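(* Let $\otimes$ be a $T$-norm and $\oplus$ a $T$-conorm, and let $\Phi(\oplus)(x,y)=1-((1-x)\oplus(1-y))$. If $\otimes$ and $\Phi(\oplus)$ are both Archimedean copulas, then $(\otimes,\oplus)$ satisfies the rearrangement inequality and the dual rearrangement inequality.
   Context: A uninorm is a function $\otimes:[0,1]^2\to[0,1]$ that is commutative, associative, monotonic ($x\leq y$ implies $x\otimes z\leq y\otimes z$), and has an identity element; a $T$-norm is a uninorm with identity $1$, a $T$-conorm one with identity $0$. A $T$-norm $\otimes$ is Archimedean if for all $0<x,y<1$ there exists $n$ with $x\otimes\cdots\otimes x$ ($n$ times) $\leq y$. A copula is a function $c:[0,1]^2\to[0,1]$ that satisfies neutrality of $1$, is monotonic, and satisfies: for all $0\leq x\leq y\leq1$, $0\leq z\leq w\leq1$, $c(x,w)-c(x,z)\leq c(y,w)-c(y,z)$. $(\otimes,\oplus)$ satisfies the rearrangement inequality if for every $n\geq1$, all $0\leq x_1\leq\cdots\leq x_n\leq 1$, $0\leq y_1\leq\cdots\leq y_n\leq 1$ and every permutation $\sigma$ of $\{1,\dots,n\}$, $$(x_n\otimes y_1)\oplus\cdots\oplus(x_1\otimes y_n)\leq (x_{\sigma(1)}\otimes y_1)\oplus\cdots\oplus(x_{\sigma(n)}\otimes y_n)\leq (x_1\otimes y_1)\oplus\cdots\oplus(x_n\otimes y_n),$$ and the dual rearrangement inequality if for all such data $$(x_n\oplus y_1)\otimes\cdots\otimes(x_1\oplus y_n)\geq (x_{\sigma(1)}\oplus y_1)\otimes\cdots\otimes(x_{\sigma(n)}\oplus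 y_n)\geq (x_1\oplus y_1)\otimes\cdots\otimes(x_n\oplus y_n).$$ *)

theory Defs
  imports "HOL-Analysis.Analysis" "HOL-Combinatorics.Permutations"
begin

type_synonym binop = "real \<Rightarrow> real \<Rightarrow> real"

definition unit_int :: "real set" where "unit_int = {0..1}"

definition uninorm :: "binop \<Rightarrow> bool" where
  "uninorm f \<longleftrightarrow>
     (\<forall>x\<in>unit_int. \<forall>y\<in>unit_int. f x y \<in> unit_int) \<and>
     (\<forall>x\<in>unit_int. \<forall>y\<in>unit_int. f x y = f y x) \<and>
     (\<forall>x\<in>unit_int. \<forall>y\<in>unit_int. \<forall>z\<in>unit_int. f (f x y) z = f x (f y z)) \<and>
     (\<forall>x\<in>unit_int. \<forall>y\<in>unit_int. \<forall>z\<in>unit_int. x \<le> y \<longrightarrow> f x z \<le> f y z) \<and>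
     (\<exists>e\<in>unit_int. \<forall>x\<in>unit_int. f e x = x \<and> f x e = x)"

definition tnorm :: "binop \<Rightarrow> bool" where
  "tnorm f \<longleftrightarrow> uninorm f \<and> (\<forall>x\<in>unit_int. f 1 x = x \<and> f x 1 = x)"

definition tconorm :: "binop \<Rightarrow> bool" where
  "tconorm f \<longleftrightarrow> uninorm f \<and> (\<forall>x\<in>unit_int. f 0 x = x \<and> f x 0 = x)"

fun npow :: "binop \<Rightarrow> nat \<Rightarrow> real \<Rightarrow> real" where
  "npow f 0 x = x"
| "npow f (Suc n) x = f (npow f n x) x"
(* npow f k x is the (k+1)-fold power *)

definition archimedean :: "binop \<Rightarrow> bool" where
  "archimedean f \<longleftrightarrow>
     (\<forall>x y. 0 < x \<and> x < 1 \<and> 0 < y \<and> y < 1 \<longrightarrow> (\<exists>n. npow f n x \<le> y))"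

definition copula :: "binop \<Rightarrow> bool" where
  "copula c \<longleftrightarrow>
     (\<forall>x\<in>unit_int. c 1 x = x \<and> c x 1 = x) \<and>
     (\<forall>x\<in>unit_int. \<forall>y\<in>unit_int. \<forall>z\<in>unit_int. x \<le> y \<longrightarrow> c x z \<le> c y z \<and> c z x \<le> c z y) \<and>
     (\<forall>x y z w. 0 \<le> x \<and> x \<le> y \<and> y \<le> 1 \<and> 0 \<le> z \<and> z \<le> w \<and> w \<le> 1 \<longrightarrow>
        c x w - c x z \<le> c y w - c y z)"

definition Phi :: "binop \<Rightarrow> binop" where
  "Phi g = (\<lambda>x y. 1 - g (1 - x) (1 - y))"

definition bigop :: "binop \<Rightarrow> (nat \<Rightarrow> real) \<Rightarrow> nat \<Rightarrow> real" where
  "bigop f a n = foldl f (a 0) (map a [1..<n])"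

definition sorted_unit :: "(nat \<Rightarrow> real) \<Rightarrow> nat \<Rightarrow> bool" where
  "sorted_unit x n \<longleftrightarrow> (\<forall>i<n. 0 \<le> x i \<and> x i \<le> 1) \<and> (\<forall>i j. i \<le> j \<and> j < n \<longrightarrow> x i \<le> x j)"

definition rearrangement_ineq :: "binop \<Rightarrow> binop \<Rightarrow> bool" where
  "rearrangement_ineq t s \<longleftrightarrow>
    (\<forall>n x y \<sigma>. n \<ge> 1 \<and> sorted_unit x n \<and> sorted_unit y n \<and> \<sigma> permutes {..<n} \<longrightarrow>
       bigop s (\<lambda>i. t (x (n - 1 - i)) (y i)) n \<le> bigop s (\<lambda>i. t (x (\<sigma> i)) (y i)) n \<and>
       bigop s (\<lambda>i. t (x (\<sigma> i)) (y i)) n \<le> bigop s (\<lambda>i. t (x i) (y i)) n)"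

definition dual_rearrangement_ineq :: "binop \<Rightarrow> binop \<Rightarrow> bool" where
  "dual_rearrangement_ineq t s \<longleftrightarrow>
    (\<forall>n x y \<sigma>. n \<ge> 1 \<and> sorted_unit x n \<and> sorted_unit y n \<and> \<sigma> permutes {..<n} \<longrightarrow>
       bigop t (\<lambda>i. s (x (n - 1 - i)) (y i)) n \<ge> bigop t (\<lambda>i. s (x (\<sigma> i)) (y i)) n \<and>
       bigop t (\<lambda>i. s (x (\<sigma> i)) (y i)) n \<ge> bigop t (\<lambda>i. s (x i) (y i)) n)"

end

theory Submission
  imports Defs
begin


definition FF :: "binop \<Rightarrow> real \<Rightarrow> (nat \<Rightarrow> real) \<Rightarrow> nat set \<Rightarrow> real" where
  "FF f z g A = Finite_Set.fold (\<lambda>i acc. f (g i) acc) z A"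

lemma cfc:
  assumes comm: "\<And>x y. f x y = f y x" and assoc: "\<And>x y z. f (f x y) z = f x (f y z)"
  shows "comp_fun_commute (\<lambda>i acc. f (g i) acc)"
  by unfold_locales (auto simp: fun_eq_iff, metis assoc comm)

lemma FF_insert:
  assumes comm: "\<And>x y. f x y = f y x" and assoc: "\<And>x y z. f (f x y) z = f x (f y z)"
    and "finite A" "i \<notin> A"
  shows "FF f z g (insert i A) = f (g i) (FF f z g A)"
  unfolding FF_def using comp_fun_commute_on.fold_insert[OF cfc[OF comm assoc, unfolded comp_fun_commute_def'], of i A] assms(3,4) by blast

lemma FF_cong:
  assumes comm: "\<And>x y. f x y = f y x" and assoc: "\<And>x y z. f (f x y) z = f x (f y z)"
    and "finite A" "\<And>i. i \<in> A \<Longrightarrow> g i = g' i"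
  shows "FF f z g A = FF f z g' A"
  unfolding FF_def
  apply (rule Finite_Set.fold_cong[where S=UNIV])
  using cfc[OF comm assoc] assms(3,4) by (auto simp: comp_fun_commute_def')

lemma rearr_gen:
  fixes f :: binop and R :: "real \<Rightarrow> real \<Rightarrow> bool" and h :: "nat \<Rightarrow> nat \<Rightarrow> real"
  assumes comm: "\<And>x y. f x y = f y x" and assoc: "\<And>x y z. f (f x y) z = f x (f y z)"
    and mono: "\<And>a b c. R a b \<Longrightarrow> R (f a c) (f b c)"
    and refl: "\<And>a. R a a" and trans: "\<And>a b c. R a b \<Longrightarrow> R b c \<Longrightarrow> R a c"
    and swap: "\<And>i i' j j'. i \<le> i' \<Longrightarrow> j \<le> j' \<Longrightarrow> i' < N \<Longrightarrow> j' < N \<Longrightarrow>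
          R (f (h i' j) (h i j')) (f (h i j) (h i' j'))"
  shows "n \<le> N \<Longrightarrow> \<sigma> permutes {..<n} \<Longrightarrow>
     R (FF f z (\<lambda>i. h (\<sigma> i) i) {..<n}) (FF f z (\<lambda>i. h i i) {..<n})"
proof (induction n arbitrary: \<sigma>)
  case 0
  then show ?case by (simp add: FF_def refl)
next
  case (Suc n)
  have ins: "{..<Suc n} = insert n {..<n}" by auto
  have lc: "f a (f b c) = f b (f a c)" for a b c
  proof -
    have "f a (f b c) = f (f a b) c" by (simp add: assoc)
    also have "\<dots> = f (f b a) c" by (rule arg_cong[where f="\<lambda>u. f u c"], rule comm)
    also have "\<dots> = f b (f a c)" by (simp add: assoc)
    finally show ?thesis .
  qed
  have fixc: "R (FF f z (\<lambda>i. h (\<tau> i) i) {..<Suc n}) (FF f z (\<lambda>i. h i i) {..<Suc n})"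
    if tp: "\<tau> permutes {..<Suc n}" and tn: "\<tau> n = n" for \<tau>
  proof -
    have "\<tau> permutes {..<n}"
      by (rule permutes_superset[OF tp]) (use tn in auto)
    then have "R (FF f z (\<lambda>i. h (\<tau> i) i) {..<n}) (FF f z (\<lambda>i. h i i) {..<n})"
      using Suc by auto
    then have "R (f (h n n) (FF f z (\<lambda>i. h (\<tau> i) i) {..<n})) (f (h n n) (FF f z (\<lambda>i. h i i) {..<n}))"
      using mono comm by metis
    then show ?thesis
      unfolding ins using FF_insert[OF comm assoc] tn by simp
  qed
  show ?case
  proof (cases "\<sigma> n = n")
    case True
    then show ?thesis using fixc Suc by blast
  next
    case False
    define m where "m = inv \<sigma> n"
    have sm: "\<sigma> m = n" unfolding m_def using Suc.prems(2) permutes_inverses(1) by fastforce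
    have mlt: "m < Suc n" unfolding m_def
      using permutes_in_image[OF permutes_inv[OF Suc.prems(2)]] by auto
    have mn: "m \<noteq> n" using sm False by auto
    define \<sigma>' where "\<sigma>' = \<sigma> \<circ> Transposition.transpose m n"
    have sp: "\<sigma>' permutes {..<Suc n}" unfolding \<sigma>'_def
      by (rule permutes_compose[OF permutes_swap_id Suc.prems(2)]) (use mlt in auto)
    have s'n: "\<sigma>' n = n" unfolding \<sigma>'_def using sm by simp
    have s'm: "\<sigma>' m = \<sigma> n" unfolding \<sigma>'_def by simp
    have jlt: "\<sigma> n < Suc n" using permutes_in_image[OF Suc.prems(2)] by auto
    define B where "B = {..<Suc n} - {m, n}"
    have finB: "finite B" "m \<notin> B" "n \<notin> insert m B" unfolding B_def using mn by auto
    have eqs: "{..<Suc n} = insert n (insert m B)" unfolding B_def using mlt by auto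
    have cong: "FF f z (\<lambda>i. h (\<sigma> i) i) B = FF f z (\<lambda>i. h (\<sigma>' i) i) B"
      by (rule FF_cong[OF comm assoc finB(1)]) (auto simp: B_def \<sigma>'_def)
    define X where "X = FF f z (\<lambda>i. h (\<sigma> i) i) B"
    have L1: "FF f z (\<lambda>i. h (\<sigma> i) i) {..<Suc n} = f (f (h n m) (h (\<sigma> n) n)) X"
      unfolding eqs X_def using FF_insert[OF comm assoc] finB sm lc by (simp add: assoc)
    have L2: "FF f z (\<lambda>i. h (\<sigma>' i) i) {..<Suc n} = f (f (h (\<sigma> n) m) (h n n)) X"
      unfolding eqs X_def cong using FF_insert[OF comm assoc] finB s'n s'm by (simp add: assoc comm)
    have "R (f (h n m) (h (\<sigma> n) n)) (f (h (\<sigma> n) m) (h n n))"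
      using swap[of "\<sigma> n" n m n] jlt mlt Suc.prems(1) by auto
    then have "R (FF f z (\<lambda>i. h (\<sigma> i) i) {..<Suc n}) (FF f z (\<lambda>i. h (\<sigma>' i) i) {..<Suc n})"
      unfolding L1 L2 using mono by blast
    then show ?thesis using fixc[OF sp s'n] trans by blast
  qed
qed



definition cl :: "real \<Rightarrow> real" where "cl x = max 0 (min 1 x)"
definition clop :: "binop \<Rightarrow> binop" where "clop f x y = f (cl x) (cl y)"

lemma cl_U: "cl x \<in> unit_int" by (auto simp: cl_def unit_int_def)
lemma cl_id: "x \<in> unit_int \<Longrightarrow> cl x = x" by (auto simp: cl_def unit_int_def)
lemma cl_mono: "a \<le> b \<Longrightarrow> cl a \<le> cl b" by (auto simp: cl_def)

lemma uni_facts: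
  assumes "uninorm f"
  shows "\<And>x y. x \<in> unit_int \<Longrightarrow> y \<in> unit_int \<Longrightarrow> f x y \<in> unit_int"
    and "\<And>x y. x \<in> unit_int \<Longrightarrow> y \<in> unit_int \<Longrightarrow> f x y = f y x"
    and "\<And>x y z. x \<in> unit_int \<Longrightarrow> y \<in> unit_int \<Longrightarrow> z \<in> unit_int \<Longrightarrow> f (f x y) z = f x (f y z)"
    and "\<And>x y z. x \<in> unit_int \<Longrightarrow> y \<in> unit_int \<Longrightarrow> z \<in> unit_int \<Longrightarrow> x \<le> y \<Longrightarrow> f x z \<le> f y z"
  using assms unfolding uninorm_def by blast+

lemma clop_U: "uninorm f \<Longrightarrow> clop f x y \<in> unit_int"
  using uni_facts(1) cl_U clop_def by metis
lemma clop_comm: "uninorm f \<Longrightarrow> clop f x y = clop f y x"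
  using uni_facts(2) cl_U clop_def by metis
lemma clop_assoc: "uninorm f \<Longrightarrow> clop f (clop f x y) z = clop f x (clop f y z)"
  unfolding clop_def using uni_facts(1,3) cl_U cl_id by metis
lemma clop_mono: "uninorm f \<Longrightarrow> a \<le> b \<Longrightarrow> clop f a c \<le> clop f b c"
  unfolding clop_def using uni_facts(4) cl_U cl_mono by metis

lemma FF_U:
  assumes "uninorm f" "z \<in> unit_int" "finite A"
  shows "FF (clop f) z g A \<in> unit_int"
  using assms(3)
proof (induction A rule: finite_induct)
  case empty
  then show ?case using assms by (simp add: FF_def)
next
  case (insert x F)
  then show ?case using FF_insert[of "clop f", OF clop_comm[OF assms(1)] clop_assoc[OF assms(1)]]
      clop_U[OF assms(1)] by simp
qed

lemma bigop_FF:
  assumes u: "uninorm f" and e: "e \<in> unit_int" and idl: "\<And>x. x \<in> unit_int \<Longrightarrow> f x e = x"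
    and a: "\<And>i. i < n \<Longrightarrow> a i \<in> unit_int" and n: "n \<ge> 1"
  shows "bigop f a n = FF (clop f) e a {..<n}"
  using a n
proof (induction n)
  case 0
  then show ?case by simp
next
  case (Suc n)
  have ins: "FF (clop f) e a {..<Suc n} = clop f (a n) (FF (clop f) e a {..<n})"
    using FF_insert[of "clop f", OF clop_comm[OF u] clop_assoc[OF u]]
    by (simp add: lessThan_Suc)
  show ?case
  proof (cases "n = 0")
    case True
    then show ?thesis using ins Suc.prems(1)[of 0] by (simp add: bigop_def FF_def clop_def cl_id e idl)
  next
    case False
    have IH: "bigop f a n = FF (clop f) e a {..<n}" using Suc False by auto
    have bU: "bigop f a n \<in> unit_int" using IH FF_U[OF u e] by simp
    have "bigop f a (Suc n) = f (bigop f a n) (a n)"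
      using False by (simp add: bigop_def)
    also have "\<dots> = f (a n) (bigop f a n)" using uni_facts(2)[OF u] bU Suc.prems(1) by simp
    also have "\<dots> = clop f (a n) (FF (clop f) e a {..<n})"
      using IH bU Suc.prems(1) by (simp add: clop_def cl_id)
    finally show ?thesis using ins by simp
  qed
qed



lemma schur:
  fixes C :: binop
  assumes cl: "\<And>x y. x \<in> unit_int \<Longrightarrow> y \<in> unit_int \<Longrightarrow> C x y \<in> unit_int"
    and comm: "\<And>x y. x \<in> unit_int \<Longrightarrow> y \<in> unit_int \<Longrightarrow> C x y = C y x"
    and assoc: "\<And>x y z. x \<in> unit_int \<Longrightarrow> y \<in> unit_int \<Longrightarrow> z \<in> unit_int \<Longrightarrow> C (C x y) z = C x (C y z)"
    and cop: "copula C"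
    and z0: "\<And>x. x \<in> unit_int \<Longrightarrow> C x 0 = 0"
    and u: "0 \<le> u" and e: "0 \<le> e" "e \<le> v" and ue: "u + e \<le> v" and v: "v \<le> 1"
  shows "C u v \<le> C (u + e) (v - e)"
proof -
  have neut: "\<And>x. x \<in> unit_int \<Longrightarrow> C 1 x = x \<and> C x 1 = x"
    and mon: "\<And>x y z. x \<in> unit_int \<Longrightarrow> y \<in> unit_int \<Longrightarrow> z \<in> unit_int \<Longrightarrow> x \<le> y \<Longrightarrow> C x z \<le> C y z \<and> C z x \<le> C z y"
    and inc: "\<And>x y z w. 0 \<le> x \<Longrightarrow> x \<le> y \<Longrightarrow> y \<le> 1 \<Longrightarrow> 0 \<le> z \<Longrightarrow> z \<le> w \<Longrightarrow> w \<le> 1 \<Longrightarrow>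
        C x w - C x z \<le> C y w - C y z"
    using cop unfolding copula_def by blast+
  have vU: "v \<in> unit_int" using u e ue v by (auto simp: unit_int_def)
  have lip: "\<bar>C v a - C v b\<bar> \<le> \<bar>a - b\<bar>" if "a \<in> unit_int" "b \<in> unit_int" for a b
  proof -
    have *: "0 \<le> C v w - C v z \<and> C v w - C v z \<le> w - z" if "z \<in> unit_int" "w \<in> unit_int" "z \<le> w" for z w
      using mon[of z w v] inc[of v 1 z w] neut[of z] neut[of w] that vU by (auto simp: unit_int_def)
    show ?thesis
      using *[of a b] *[of b a] that by (cases "a \<le> b") auto
  qed
  have cont: "continuous_on {0..1} (C v)"
    unfolding continuous_on_iff
  proof (intro ballI allI impI)
    fix x d :: real assume x: "x \<in> {0..1::real}" and d: "0 < d"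
    show "\<exists>da>0. \<forall>x'\<in>{0..1}. dist x' x < da \<longrightarrow> dist (C v x') (C v x) < d"
      using d x lip by (intro exI[of _ d]) (auto simp: dist_real_def unit_int_def, smt (verit))
  qed
  have "C v 0 \<le> v - e" "v - e \<le> C v 1" using z0[OF vU] neut[OF vU] e by auto
  from IVT'[OF this _ cont] obtain w where w: "0 \<le> w" "w \<le> 1" "C v w = v - e" by auto
  have wU: "w \<in> unit_int" using w by (simp add: unit_int_def)
  have ueU: "u + e \<in> unit_int" using u e ue v by (auto simp: unit_int_def)
  have uU: "u \<in> unit_int" using u e ue v by (auto simp: unit_int_def)
  have "C (u+e) 1 - C (u+e) w \<le> C v 1 - C v w"
    using inc[of "u+e" v w 1] u e ue v w by auto
  then have uw: "u \<le> C (u+e) w" using neut ueU vU w by auto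
  have "C (u+e) (v-e) = C (u+e) (C w v)" using w comm wU vU by simp
  also have "\<dots> = C (C (u+e) w) v" using assoc ueU wU vU by simp
  finally have eq: "C (u+e) (v-e) = C (C (u+e) w) v" .
  show ?thesis unfolding eq using mon[of u "C (u+e) w" v] uw uU cl[OF ueU wU] vU by auto
qed



lemma rho_permutes: "(\<lambda>i. if i < n then n - 1 - i else i) permutes {..<(n::nat)}"
proof (rule bij_imp_permutes)
  show "bij_betw (\<lambda>i. if i < n then n - 1 - i else i) {..<n} {..<n}"
    unfolding bij_betw_def
  proof
    show "inj_on (\<lambda>i. if i < n then n - 1 - i else i) {..<n}"
      by (auto simp: inj_on_def)
    show "(\<lambda>i. if i < n then n - 1 - i else i) ` {..<n} = {..<n}"
    proof (intro equalityI subsetI)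
      fix y assume "y \<in> (\<lambda>i. if i < n then n - 1 - i else i) ` {..<n}"
      then show "y \<in> {..<n}" by auto
    next
      fix y assume "y \<in> {..<n}"
      then show "y \<in> (\<lambda>i. if i < n then n - 1 - i else i) ` {..<n}"
        by (intro image_eqI[of _ _ "n - 1 - y"]) auto
    qed
  qed
qed auto

lemma main_gen:
  fixes f g :: binop and R :: "real \<Rightarrow> real \<Rightarrow> bool"
  assumes u: "uninorm f" and e: "e \<in> unit_int" and idl: "\<And>x. x \<in> unit_int \<Longrightarrow> f x e = x"
    and gU: "\<And>x y. x \<in> unit_int \<Longrightarrow> y \<in> unit_int \<Longrightarrow> g x y \<in> unit_int"
    and R: "R = (\<le>) \<or> R = (\<lambda>a b. b \<le> a)"
    and K: "\<And>x1 x2 y1 y2. x1 \<in> unit_int \<Longrightarrow> x2 \<in> unit_int \<Longrightarrow> y1 \<in> unit_int \<Longrightarrow> y2 \<in> unit_int \<Longrightarrow>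
        x1 \<le> x2 \<Longrightarrow> y1 \<le> y2 \<Longrightarrow> R (f (g x2 y1) (g x1 y2)) (f (g x1 y1) (g x2 y2))"
    and n: "n \<ge> 1" and sx: "sorted_unit x n" and sy: "sorted_unit y n" and sig: "\<sigma> permutes {..<n}"
  shows "R (bigop f (\<lambda>i. g (x (n - 1 - i)) (y i)) n) (bigop f (\<lambda>i. g (x (\<sigma> i)) (y i)) n) \<and>
         R (bigop f (\<lambda>i. g (x (\<sigma> i)) (y i)) n) (bigop f (\<lambda>i. g (x i) (y i)) n)"
proof -
  define F where "F = clop f"
  have comm: "\<And>a b. F a b = F b a" unfolding F_def using clop_comm[OF u] by blast
  have assoc: "\<And>a b c. F (F a b) c = F a (F b c)" unfolding F_def using clop_assoc[OF u] by blast
  have Fmono: "\<And>a b c. a \<le> b \<Longrightarrow> F a c \<le> F b c" unfolding F_def using clop_mono[OF u] by blast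
  have Feq: "F a b = f a b" if "a \<in> unit_int" "b \<in> unit_int" for a b
    using that by (simp add: F_def clop_def cl_id)
  have xU: "\<And>i. i < n \<Longrightarrow> x i \<in> unit_int" and yU: "\<And>i. i < n \<Longrightarrow> y i \<in> unit_int"
    using sx sy by (auto simp: sorted_unit_def unit_int_def)
  have xs: "\<And>i j. i \<le> j \<Longrightarrow> j < n \<Longrightarrow> x i \<le> x j" and ys: "\<And>i j. i \<le> j \<Longrightarrow> j < n \<Longrightarrow> y i \<le> y j"
    using sx sy by (auto simp: sorted_unit_def)
  have sn: "\<And>i. i < n \<Longrightarrow> \<sigma> i < n" using permutes_in_image[OF sig] by auto
  have Rmono: "R a b \<Longrightarrow> R (F a c) (F b c)" for a b c using R Fmono by auto
  have Rrefl: "R a a" for a using R by auto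
  have Rtrans: "R a b \<Longrightarrow> R b c \<Longrightarrow> R a c" for a b c using R by auto
  define R' where "R' = (\<lambda>a b. R b a)"
  have R'mono: "R' a b \<Longrightarrow> R' (F a c) (F b c)" for a b c using R Fmono by (auto simp: R'_def)
  have R'refl: "R' a a" for a using R by (auto simp: R'_def)
  have R'trans: "R' a b \<Longrightarrow> R' b c \<Longrightarrow> R' a c" for a b c using R by (auto simp: R'_def)
  define h where "h = (\<lambda>i j. g (x i) (y j))"
  define h' where "h' = (\<lambda>i j. g (x (n - 1 - i)) (y j))"
  define \<rho> where "\<rho> = (\<lambda>i. if i < n then n - 1 - i else i)"
  have bg: "\<And>a. (\<And>i. i < n \<Longrightarrow> a i \<in> unit_int) \<Longrightarrow> bigop f a n = FF F e a {..<n}"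
    unfolding F_def using bigop_FF[OF u e idl _ n] by blast
  have swap1: "R (F (h i' j) (h i j')) (F (h i j) (h i' j'))"
    if "i \<le> i'" "j \<le> j'" "i' < n" "j' < n" for i i' j j'
  proof -
    have lt: "i < n" "j < n" using that by auto
    have U: "x i \<in> unit_int" "x i' \<in> unit_int" "y j \<in> unit_int" "y j' \<in> unit_int"
      using lt that xU yU by auto
    have "R (f (g (x i') (y j)) (g (x i) (y j'))) (f (g (x i) (y j)) (g (x i') (y j')))"
      using K[OF U(1,2,3,4)] xs[of i i'] ys[of j j'] that by blast
    then show ?thesis unfolding h_def using Feq gU U by simp
  qed
  have up: "R (FF F e (\<lambda>i. h (\<sigma> i) i) {..<n}) (FF F e (\<lambda>i. h i i) {..<n})"
    by (rule rearr_gen[where f=F and R=R and h=h and N=n, OF comm assoc Rmono Rrefl Rtrans swap1 order.refl sig]) auto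
  have swap2: "R' (F (h' i' j) (h' i j')) (F (h' i j) (h' i' j'))"
    if "i \<le> i'" "j \<le> j'" "i' < n" "j' < n" for i i' j j'
  proof -
    have "R (F (h' i j) (h' i' j')) (F (h' i' j) (h' i j'))"
    proof -
      have lt: "i < n" "j < n" using that by auto
      have U: "x (n - 1 - i') \<in> unit_int" "x (n - 1 - i) \<in> unit_int" "y j \<in> unit_int" "y j' \<in> unit_int"
        using lt that xU yU by auto
      have le: "x (n - 1 - i') \<le> x (n - 1 - i)" using xs[of "n - 1 - i'" "n - 1 - i"] that by auto
      have "R (f (g (x (n - 1 - i)) (y j)) (g (x (n - 1 - i')) (y j'))) (f (g (x (n - 1 - i')) (y j)) (g (x (n - 1 - i)) (y j')))"
        using K[OF U(1,2,3,4) le] ys[of j j'] that by blast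
      then show ?thesis unfolding h'_def using Feq gU U by simp
    qed
    then show ?thesis unfolding R'_def .
  qed
  have rp: "\<rho> \<circ> \<sigma> permutes {..<n}" unfolding \<rho>_def by (rule permutes_compose[OF sig rho_permutes])
  have lo: "R' (FF F e (\<lambda>i. h' ((\<rho> \<circ> \<sigma>) i) i) {..<n}) (FF F e (\<lambda>i. h' i i) {..<n})"
    by (rule rearr_gen[where f=F and R=R' and h=h' and N=n, OF comm assoc R'mono R'refl R'trans swap2 order.refl rp]) auto
  have c1: "FF F e (\<lambda>i. h' ((\<rho> \<circ> \<sigma>) i) i) {..<n} = FF F e (\<lambda>i. h (\<sigma> i) i) {..<n}"
  proof (rule FF_cong[OF comm assoc])
    fix i assume "i \<in> {..<n}"
    then have "i < n" by simp
    then have "\<sigma> i < n" using sn by blast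
    then have "n - 1 - (n - 1 - \<sigma> i) = \<sigma> i" by linarith
    then show "h' ((\<rho> \<circ> \<sigma>) i) i = h (\<sigma> i) i"
      using \<open>\<sigma> i < n\<close> by (simp add: h_def h'_def \<rho>_def)
  qed simp
  have b1: "bigop f (\<lambda>i. g (x (n - 1 - i)) (y i)) n = FF F e (\<lambda>i. h' i i) {..<n}"
    unfolding h'_def by (rule bg) (auto intro!: gU xU yU)
  have b2: "bigop f (\<lambda>i. g (x (\<sigma> i)) (y i)) n = FF F e (\<lambda>i. h (\<sigma> i) i) {..<n}"
    unfolding h_def by (rule bg) (auto intro!: gU xU yU sn)
  have b3: "bigop f (\<lambda>i. g (x i) (y i)) n = FF F e (\<lambda>i. h i i) {..<n}"
    unfolding h_def by (rule bg) (auto intro!: gU xU yU)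
  show ?thesis unfolding b1 b2 b3 using up lo c1 by (simp add: R'_def)
qed



lemma Phi_facts:
  assumes s: "tconorm s"
  shows "\<And>x y. x \<in> unit_int \<Longrightarrow> y \<in> unit_int \<Longrightarrow> Phi s x y \<in> unit_int"
    and "\<And>x y. x \<in> unit_int \<Longrightarrow> y \<in> unit_int \<Longrightarrow> Phi s x y = Phi s y x"
    and "\<And>x y z. x \<in> unit_int \<Longrightarrow> y \<in> unit_int \<Longrightarrow> z \<in> unit_int \<Longrightarrow> Phi s (Phi s x y) z = Phi s x (Phi s y z)"
    and "\<And>x. x \<in> unit_int \<Longrightarrow> Phi s x 0 = 0"
proof -
  have u: "uninorm s" and id0: "\<And>x. x \<in> unit_int \<Longrightarrow> s 0 x = x \<and> s x 0 = x"
    using s unfolding tconorm_def by blast+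
  have c: "\<And>x. x \<in> unit_int \<Longrightarrow> 1 - x \<in> unit_int" by (auto simp: unit_int_def)
  show "\<And>x y. x \<in> unit_int \<Longrightarrow> y \<in> unit_int \<Longrightarrow> Phi s x y \<in> unit_int"
    using uni_facts(1)[OF u] c unfolding Phi_def by (metis diff_diff_cancel)
  show "\<And>x y. x \<in> unit_int \<Longrightarrow> y \<in> unit_int \<Longrightarrow> Phi s x y = Phi s y x"
    using uni_facts(2)[OF u] c unfolding Phi_def by metis
  show "\<And>x y z. x \<in> unit_int \<Longrightarrow> y \<in> unit_int \<Longrightarrow> z \<in> unit_int \<Longrightarrow> Phi s (Phi s x y) z = Phi s x (Phi s y z)"
    using uni_facts(3)[OF u] c unfolding Phi_def by simp
  show "\<And>x. x \<in> unit_int \<Longrightarrow> Phi s x 0 = 0"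
  proof -
    fix x assume x: "x \<in> unit_int"
    have 1: "1 \<in> unit_int" "0 \<in> unit_int" by (auto simp: unit_int_def)
    have "s 0 1 \<le> s (1 - x) 1" using uni_facts(4)[OF u 1(2) c[OF x] 1(1)] x by (auto simp: unit_int_def)
    moreover have "s (1 - x) 1 \<le> 1" using uni_facts(1)[OF u c[OF x] 1(1)] by (auto simp: unit_int_def)
    ultimately show "Phi s x 0 = 0" using id0[OF 1(1)] by (simp add: Phi_def)
  qed
qed

lemma K1:
  assumes t: "tnorm t" and s: "tconorm s" and ct: "copula t" and cs: "copula (Phi s)"
    and U: "x1 \<in> unit_int" "x2 \<in> unit_int" "y1 \<in> unit_int" "y2 \<in> unit_int"
    and le: "x1 \<le> x2" "y1 \<le> y2"
  shows "s (t x2 y1) (t x1 y2) \<le> s (t x1 y1) (t x2 y2)"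
proof -
  have ut: "uninorm t" and us: "uninorm s" using t s by (auto simp: tnorm_def tconorm_def)
  define a where "a = t x1 y1"
  define b where "b = t x2 y1"
  define c where "c = t x1 y2"
  define d where "d = t x2 y2"
  have mt: "\<And>x y z. x \<in> unit_int \<Longrightarrow> y \<in> unit_int \<Longrightarrow> z \<in> unit_int \<Longrightarrow> x \<le> y \<Longrightarrow> t x z \<le> t y z \<and> t z x \<le> t z y"
    using ct unfolding copula_def by blast
  have inc: "t x1 y2 - t x1 y1 \<le> t x2 y2 - t x2 y1"
    using ct U le unfolding copula_def unit_int_def by auto
  have abcd: "a \<le> b" "a \<le> c" "b \<le> d" "c \<le> d" "b + c \<le> a + d"
    using mt[OF U(1,2) U(3) le(1)] mt[OF U(1,2) U(4) le(1)] mt[OF U(3,4) U(1) le(2)] mt[OF U(3,4) U(2) le(2)] inc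
    unfolding a_def b_def c_def d_def by auto
  have aU: "a \<in> unit_int" "b \<in> unit_int" "c \<in> unit_int" "d \<in> unit_int"
    unfolding a_def b_def c_def d_def using uni_facts(1)[OF ut] U by auto
  define p where "p = max b c"
  define q where "q = min b c"
  have pq: "s b c = s p q" unfolding p_def q_def using uni_facts(2)[OF us] aU by (cases "b \<le> c") auto
  have pqp: "a \<le> q" "q \<le> p" "p \<le> d" "p + q \<le> a + d" "p \<in> unit_int" "q \<in> unit_int"
    using abcd aU unfolding p_def q_def by (auto simp: unit_int_def)
  have rU: "a + d - p \<in> unit_int" using pqp aU by (auto simp: unit_int_def)
  have s1: "s p q \<le> s p (a + d - p)"
    using uni_facts(4)[OF us pqp(6) rU pqp(5)] uni_facts(2)[OF us] pqp rU by auto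
  have sch: "Phi s (1 - d) (1 - a) \<le> Phi s ((1 - d) + (d - p)) ((1 - a) - (d - p))"
    by (rule schur[OF Phi_facts(1-3)[OF s] cs Phi_facts(4)[OF s]])
       (use pqp aU in \<open>auto simp: unit_int_def\<close>)
  have "s p (a + d - p) \<le> s d a"
    using sch by (simp add: Phi_def algebra_simps)
  also have "\<dots> = s a d" using uni_facts(2)[OF us] aU by auto
  finally show ?thesis using pq s1 unfolding a_def b_def c_def d_def by linarith
qed

lemma K2:
  assumes t: "tnorm t" and s: "tconorm s" and ct: "copula t" and cs: "copula (Phi s)"
    and U: "x1 \<in> unit_int" "x2 \<in> unit_int" "y1 \<in> unit_int" "y2 \<in> unit_int"
    and le: "x1 \<le> x2" "y1 \<le> y2"
  shows "t (s x1 y1) (s x2 y2) \<le> t (s x2 y1) (s x1 y2)"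
proof -
  have ut: "uninorm t" and us: "uninorm s" using t s by (auto simp: tnorm_def tconorm_def)
  have t0: "\<And>x. x \<in> unit_int \<Longrightarrow> t x 0 = 0"
  proof -
    fix x assume x: "x \<in> unit_int"
    have 1: "1 \<in> unit_int" "0 \<in> unit_int" by (auto simp: unit_int_def)
    have "t x 0 \<le> t 1 0" using uni_facts(4)[OF ut x 1(1) 1(2)] x by (auto simp: unit_int_def)
    moreover have "0 \<le> t x 0" using uni_facts(1)[OF ut x 1(2)] by (auto simp: unit_int_def)
    ultimately show "t x 0 = 0" using t 1 by (auto simp: tnorm_def)
  qed
  define a where "a = s x1 y1"
  define b where "b = s x2 y1"
  define c where "c = s x1 y2"
  define d where "d = s x2 y2"
  have ms: "\<And>x y z. x \<in> unit_int \<Longrightarrow> y \<in> unit_int \<Longrightarrow> z \<in> unit_int \<Longrightarrow> x \<le> y \<Longrightarrow> s x z \<le> s y z \<and> s z x \<le> s z y"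
    using uni_facts(4)[OF us] uni_facts(2)[OF us] by metis
  have inc: "Phi s (1 - x2) (1 - y1) - Phi s (1 - x2) (1 - y2) \<le> Phi s (1 - x1) (1 - y1) - Phi s (1 - x1) (1 - y2)"
    using cs U le unfolding copula_def unit_int_def by auto
  have abcd: "a \<le> b" "a \<le> c" "b \<le> d" "c \<le> d" "a + d \<le> b + c"
    using ms[OF U(1,2) U(3) le(1)] ms[OF U(1,2) U(4) le(1)] ms[OF U(3,4) U(1) le(2)] ms[OF U(3,4) U(2) le(2)] inc
    unfolding a_def b_def c_def d_def by (auto simp: Phi_def)
  have aU: "a \<in> unit_int" "b \<in> unit_int" "c \<in> unit_int" "d \<in> unit_int"
    unfolding a_def b_def c_def d_def using uni_facts(1)[OF us] U by auto
  define p where "p = min b c"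
  define q where "q = max b c"
  have pq: "t b c = t p q" unfolding p_def q_def using uni_facts(2)[OF ut] aU by (cases "b \<le> c") auto
  have pqp: "a \<le> p" "p \<le> q" "q \<le> d" "a + d \<le> p + q" "p \<in> unit_int" "q \<in> unit_int"
    using abcd aU unfolding p_def q_def by (auto simp: unit_int_def)
  define v where "v = min 1 (p + q - a)"
  have vU: "v \<in> unit_int" "d \<le> v" "q \<le> v" "a + v - q \<le> p" using pqp aU by (auto simp: unit_int_def v_def)
  have mt: "\<And>x y z. x \<in> unit_int \<Longrightarrow> y \<in> unit_int \<Longrightarrow> z \<in> unit_int \<Longrightarrow> x \<le> y \<Longrightarrow> t x z \<le> t y z \<and> t z x \<le> t z y"
    using ct unfolding copula_def by blast
  have s1: "t a d \<le> t a v" using mt[OF aU(4) vU(1) aU(1) vU(2)] by auto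
  have sch: "t a v \<le> t (a + (v - q)) (v - (v - q))"
    by (rule schur[OF uni_facts(1-3)[OF ut] ct t0])
       (use pqp aU vU in \<open>auto simp: unit_int_def\<close>)
  have auq: "a + (v - q) \<in> unit_int" using pqp aU vU by (auto simp: unit_int_def)
  have s3: "t (a + (v - q)) q \<le> t p q" using mt[OF auq pqp(5) pqp(6)] vU by auto
  show ?thesis using s1 sch s3 pq unfolding a_def b_def c_def d_def by simp
qed

theorem theorem9:
  fixes t s :: "real \<Rightarrow> real \<Rightarrow> real"
  assumes "tnorm t" and "tconorm s"
    and "copula t" and "archimedean t"
    and "copula (Phi s)" and "archimedean (Phi s)"
  shows "rearrangement_ineq t s \<and> dual_rearrangement_ineq t s"
proof -
  have ut: "uninorm t" and us: "uninorm s" using assms(1,2) by (auto simp: tnorm_def tconorm_def)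
  have e0: "(0::real) \<in> unit_int" and e1: "(1::real) \<in> unit_int" by (auto simp: unit_int_def)
  have id0: "\<And>x. x \<in> unit_int \<Longrightarrow> s x 0 = x" using assms(2) by (auto simp: tconorm_def)
  have id1: "\<And>x. x \<in> unit_int \<Longrightarrow> t x 1 = x" using assms(1) by (auto simp: tnorm_def)
  have A: "rearrangement_ineq t s"
    unfolding rearrangement_ineq_def
  proof (intro allI impI)
    fix n x y \<sigma> assume h: "1 \<le> n \<and> sorted_unit x n \<and> sorted_unit y n \<and> \<sigma> permutes {..<(n::nat)}"
    show "bigop s (\<lambda>i. t (x (n - 1 - i)) (y i)) n \<le> bigop s (\<lambda>i. t (x (\<sigma> i)) (y i)) n \<and>
       bigop s (\<lambda>i. t (x (\<sigma> i)) (y i)) n \<le> bigop s (\<lambda>i. t (x i) (y i)) n"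
      by (rule main_gen[where R="(\<le>)", OF us e0 id0 uni_facts(1)[OF ut] _ K1[OF assms(1,2,3,5)]])
         (use h in auto)
  qed
  have B: "dual_rearrangement_ineq t s"
    unfolding dual_rearrangement_ineq_def
  proof (intro allI impI)
    fix n x y \<sigma> assume h: "1 \<le> n \<and> sorted_unit x n \<and> sorted_unit y n \<and> \<sigma> permutes {..<(n::nat)}"
    have "(\<lambda>a b. b \<le> a) (bigop t (\<lambda>i. s (x (n - 1 - i)) (y i)) n) (bigop t (\<lambda>i. s (x (\<sigma> i)) (y i)) n) \<and>
       (\<lambda>a b. b \<le> a) (bigop t (\<lambda>i. s (x (\<sigma> i)) (y i)) n) (bigop t (\<lambda>i. s (x i) (y i)) n)"
      by (rule main_gen[where R="\<lambda>a b. b \<le> a", OF ut e1 id1 uni_facts(1)[OF us] _ K2[OF assms(1,2,3,5)]])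
         (use h in auto)
    then show "bigop t (\<lambda>i. s (x (n - 1 - i)) (y i)) n \<ge> bigop t (\<lambda>i. s (x (\<sigma> i)) (y i)) n \<and>
       bigop t (\<lambda>i. s (x (\<sigma> i)) (y i)) n \<ge> bigop t (\<lambda>i. s (x i) (y i)) n" by simp
  qed
  show ?thesis using A B by blast
qed

end
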